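(* Let $G$ be a connected graph with root $x_0$, let $\lambda,k\ge1$ and $N\in\mathbb N$. Then taking the $(N,1)$-skeleton of the skeleton $G_{\lambda,k}$ (rooted at the block of $x_0$) yields the skeleton $G_{N\lambda,k}$ of $G$: that is, $G_{(\lambda,k)_{(N,1)}}=G_{N\lambda,k}$, in the sense that two vertices $x,y$ of $G$ are sent to the same vertex by the natural map $G\to G_{N\lambda,k}$ iff they are sent to the same vertex by the composite natural map $G\to G_{\lambda,k}\to G_{(\lambda,k)_{(N,1)}}$, and the edges correspond accordingly.
   Context: $d$ is the graph metric. A set $X$ of vertices is $k$-connected if any two of its points are joined by a finite sequence in $X$ with consecutive distances $\le k$. Skeleton $G_{\lambda,k}$ of a connected graph $G$ (root $x_0\in V(G)$, scale $\lambda\ge1$, connectivity $k\ge1$): layers $A_{N,\lambda}=\{x: N\lambda<d(x,x_0)\le(N+1)\lambda\}$, $N\in\mathbb Z$; blocks are the maximal $k$-connected subsets of layers (distances in $G$); $G_{\lambda,k}$ has a vertex per block and an edge between two blocks iff an edge of $G$ joins a vertex of one to a vertex of the other. The natural map sends each vertex to its block. $G_{(\lambda,k)_{(\lambda',k')}}$ denotes the $(\lambda',k')$-skeleton of the graph $G_{\lambda,k}$ (with its own graph metric), rooted at the block containing $x_0$. *)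

theory Defs
  imports Complex_Main
begin

definition graph :: "'a set \<Rightarrow> ('a \<Rightarrow> 'a \<Rightarrow> bool) \<Rightarrow> bool" where
  "graph V E \<longleftrightarrow> (\<forall>x y. E x y \<longrightarrow> x \<in> V \<and> y \<in> V \<and> E y x)"

definition walk :: "'a set \<Rightarrow> ('a \<Rightarrow> 'a \<Rightarrow> bool) \<Rightarrow> 'a list \<Rightarrow> bool" where
  "walk V E xs \<longleftrightarrow> xs \<noteq> [] \<and> set xs \<subseteq> V \<and> (\<forall>i. Suc i < length xs \<longrightarrow> E (xs ! i) (xs ! Suc i))"

definition connected_graph :: "'a set \<Rightarrow> ('a \<Rightarrow> 'a \<Rightarrow> bool) \<Rightarrow> bool" where
  "connected_graph V E \<longleftrightarrow> V \<noteq> {} \<and>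
     (\<forall>x\<in>V. \<forall>y\<in>V. \<exists>xs. walk V E xs \<and> hd xs = x \<and> last xs = y)"

definition gdist :: "'a set \<Rightarrow> ('a \<Rightarrow> 'a \<Rightarrow> bool) \<Rightarrow> 'a \<Rightarrow> 'a \<Rightarrow> nat" where
  "gdist V E x y = (LEAST n. \<exists>xs. walk V E xs \<and> hd xs = x \<and> last xs = y \<and> length xs = Suc n)"

definition k_connected :: "('a \<Rightarrow> 'a \<Rightarrow> nat) \<Rightarrow> real \<Rightarrow> 'a set \<Rightarrow> bool" where
  "k_connected d k X \<longleftrightarrow> (\<forall>x\<in>X. \<forall>y\<in>X. \<exists>xs. xs \<noteq> [] \<and> hd xs = x \<and> last xs = y \<and> set xs \<subseteq> X \<and>
      (\<forall>i. Suc i < length xs \<longrightarrow> real (d (xs ! i) (xs ! Suc i)) \<le> k))"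

definition layer :: "'a set \<Rightarrow> ('a \<Rightarrow> 'a \<Rightarrow> bool) \<Rightarrow> 'a \<Rightarrow> real \<Rightarrow> int \<Rightarrow> 'a set" where
  "layer V E x0 lam n = {x\<in>V. real_of_int n * lam < real (gdist V E x x0) \<and>
                                  real (gdist V E x x0) \<le> (real_of_int n + 1) * lam}"

definition blocks :: "'a set \<Rightarrow> ('a \<Rightarrow> 'a \<Rightarrow> bool) \<Rightarrow> 'a \<Rightarrow> real \<Rightarrow> real \<Rightarrow> 'a set set" where
  "blocks V E x0 lam k = {B. B \<noteq> {} \<and> (\<exists>n. B \<subseteq> layer V E x0 lam n \<and>
       k_connected (gdist V E) k B \<and>
       (\<forall>C. B \<subseteq> C \<and> C \<subseteq> layer V E x0 lam n \<and> k_connected (gdist V E) k C \<longrightarrow> C = B))}"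

definition skel_E :: "'a set \<Rightarrow> ('a \<Rightarrow> 'a \<Rightarrow> bool) \<Rightarrow> 'a \<Rightarrow> real \<Rightarrow> real \<Rightarrow> 'a set \<Rightarrow> 'a set \<Rightarrow> bool" where
  "skel_E V E x0 lam k B C \<longleftrightarrow> B \<in> blocks V E x0 lam k \<and> C \<in> blocks V E x0 lam k \<and> B \<noteq> C \<and>
       (\<exists>x\<in>B. \<exists>y\<in>C. E x y)"

definition skel_map :: "'a set \<Rightarrow> ('a \<Rightarrow> 'a \<Rightarrow> bool) \<Rightarrow> 'a \<Rightarrow> real \<Rightarrow> real \<Rightarrow> 'a \<Rightarrow> 'a set" where
  "skel_map V E x0 lam k x = (THE B. B \<in> blocks V E x0 lam k \<and> x \<in> B)"

end

theory Submission
  imports Defs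
begin

lemma relpowp_sym:
  assumes "\<And>a b. E a b \<Longrightarrow> E b a"
  shows "(E ^^ n) a b \<Longrightarrow> (E ^^ n) b a"
proof (induction n arbitrary: a b)
  case 0 then show ?case by simp
next
  case (Suc n)
  from relpowp_Suc_D2[OF Suc.prems] obtain c where "E a c" "(E ^^ n) c b" by blast
  then show ?case using Suc.IH assms relpowp_Suc_I by metis
qed

lemma walk_iff_relpowp:
  assumes g: "graph V E" and a: "a \<in> V"
  shows "(\<exists>xs. walk V E xs \<and> hd xs = a \<and> last xs = b \<and> length xs = Suc n) \<longleftrightarrow> (E ^^ n) a b"
proof
  assume "\<exists>xs. walk V E xs \<and> hd xs = a \<and> last xs = b \<and> length xs = Suc n"
  then obtain xs where w: "walk V E xs" "hd xs = a" "last xs = b" "length xs = Suc n" by blast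
  show "(E ^^ n) a b"
    unfolding relpowp_fun_conv
  proof (intro exI conjI allI impI)
    show "xs ! 0 = a" using w by (metis hd_conv_nth list.size(3) nat.distinct(1))
    show "xs ! n = b" using w by (metis diff_Suc_1 last_conv_nth list.size(3) nat.distinct(1))
    fix i assume "i < n" then show "E (xs ! i) (xs ! Suc i)" using w unfolding walk_def by simp
  qed
next
  assume "(E ^^ n) a b"
  then obtain f where f: "f 0 = a" "f n = b" "\<forall>i<n. E (f i) (f (Suc i))"
    unfolding relpowp_fun_conv by blast
  have fV: "f i \<in> V" if "i \<le> n" for i
  proof (cases i)
    case 0 then show ?thesis using f a by simp
  next
    case (Suc j) then have "E (f j) (f i)" using f that by simp
    then show ?thesis using g unfolding graph_def by blast
  qed
  let ?xs = "map f [0..<Suc n]"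
  have "walk V E ?xs" unfolding walk_def using fV f(3)
    by (auto simp del: upt_Suc simp add: nth_Cons' less_Suc_eq_le)
  moreover have "hd ?xs = a" using f by (simp add: hd_map del: upt_Suc)
  moreover have "last ?xs = b" using f by simp
  ultimately show "\<exists>xs. walk V E xs \<and> hd xs = a \<and> last xs = b \<and> length xs = Suc n"
    by (intro exI[of _ ?xs]) simp
qed

lemma gdist_char:
  assumes "graph V E" "a \<in> V"
  shows "gdist V E a b = (LEAST n. (E ^^ n) a b)"
  unfolding gdist_def using walk_iff_relpowp[OF assms] by simp

lemma gdist_le:
  assumes "graph V E" "a \<in> V" "(E ^^ n) a b"
  shows "gdist V E a b \<le> n" "(E ^^ gdist V E a b) a b"
  using gdist_char[OF assms(1,2)] assms(3) by (auto intro: Least_le LeastI)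

lemma graph_sym: "graph V E \<Longrightarrow> E a b \<Longrightarrow> E b a"
  unfolding graph_def by blast

lemma graph_V: "graph V E \<Longrightarrow> E a b \<Longrightarrow> a \<in> V \<and> b \<in> V"
  unfolding graph_def by blast

lemma gdist_sym:
  assumes g: "graph V E" and "a \<in> V" "b \<in> V"
  shows "gdist V E a b = gdist V E b a"
proof -
  have "(E ^^ n) a b \<longleftrightarrow> (E ^^ n) b a" for n
    using relpowp_sym[of E, OF graph_sym[OF g]] by blast
  then show ?thesis using gdist_char[OF g] assms by simp
qed

lemma gdist_refl: "graph V E \<Longrightarrow> a \<in> V \<Longrightarrow> gdist V E a a = 0"
  using gdist_le(1)[of V E a 0 a] by simp

lemma gdist_edge: "graph V E \<Longrightarrow> E a b \<Longrightarrow> gdist V E a b \<le> 1"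
  by (metis gdist_le(1) graph_V relpowp_1)

lemma list_rtranclp:
  "xs \<noteq> [] \<Longrightarrow> set xs \<subseteq> L \<Longrightarrow> (\<forall>i. Suc i < length xs \<longrightarrow> P (xs!i) (xs!Suc i)) \<Longrightarrow>
   (\<lambda>a b. a\<in>L \<and> b\<in>L \<and> P a b)\<^sup>*\<^sup>* (hd xs) (last xs)"
proof (induction xs)
  case Nil then show ?case by simp
next
  case (Cons x xs)
  show ?case
  proof (cases "xs = []")
    case True then show ?thesis by simp
  next
    case False
    have h: "\<forall>i. Suc i < length xs \<longrightarrow> P (xs!i) (xs!Suc i)" using Cons.prems(3) by auto
    have "P x (hd xs)" using Cons.prems(3)[rule_format, of 0] False by (simp add: hd_conv_nth)
    moreover have "x \<in> L" "hd xs \<in> L" using Cons.prems(2) False by auto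
    ultimately show ?thesis using Cons.IH[OF False _ h] Cons.prems(2) False
      by (auto intro: converse_rtranclp_into_rtranclp)
  qed
qed

lemma rtranclp_list:
  "Q\<^sup>*\<^sup>* a b \<Longrightarrow> \<exists>xs. xs\<noteq>[] \<and> hd xs = a \<and> last xs = b \<and>
     (\<forall>i. Suc i < length xs \<longrightarrow> Q (xs!i) (xs!Suc i)) \<and> set xs \<subseteq> {c. Q\<^sup>*\<^sup>* a c}"
proof (induction rule: converse_rtranclp_induct)
  case base then show ?case by (intro exI[of _ "[b]"]) auto
next
  case (step a a')
  then obtain xs where xs: "xs\<noteq>[]" "hd xs = a'" "last xs = b"
     "\<forall>i. Suc i < length xs \<longrightarrow> Q (xs!i) (xs!Suc i)" "set xs \<subseteq> {c. Q\<^sup>*\<^sup>* a' c}" by blast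
  have "\<forall>i. Suc i < length (a#xs) \<longrightarrow> Q ((a#xs)!i) ((a#xs)!Suc i)"
  proof (intro allI impI)
    fix i assume "Suc i < length (a#xs)"
    then show "Q ((a#xs)!i) ((a#xs)!Suc i)"
      using xs step(1) by (cases i) (auto simp: hd_conv_nth)
  qed
  moreover have "set (a#xs) \<subseteq> {c. Q\<^sup>*\<^sup>* a c}" using xs(5) step(1)
    by (auto intro: converse_rtranclp_into_rtranclp)
  ultimately show ?case using xs by (intro exI[of _ "a#xs"]) auto
qed

definition lvl :: "'a set \<Rightarrow> ('a \<Rightarrow> 'a \<Rightarrow> bool) \<Rightarrow> 'a \<Rightarrow> real \<Rightarrow> 'a \<Rightarrow> int" where
  "lvl V E x0 lam x = \<lceil>real (gdist V E x x0) / lam\<rceil> - 1"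

definition crel where
  "crel V E x0 lam k n a b \<longleftrightarrow> a \<in> layer V E x0 lam n \<and> b \<in> layer V E x0 lam n \<and> real (gdist V E a b) \<le> k"

definition cls where
  "cls V E x0 lam k x = {y. (crel V E x0 lam k (lvl V E x0 lam x))\<^sup>*\<^sup>* x y}"

lemma layer_eq:
  assumes "lam > 0"
  shows "layer V E x0 lam n = {x\<in>V. lvl V E x0 lam x = n}"
proof -
  have "real_of_int n * lam < t \<and> t \<le> (real_of_int n + 1) * lam \<longleftrightarrow> \<lceil>t / lam\<rceil> - 1 = n" for t
  proof -
    have "\<lceil>t / lam\<rceil> - 1 = n \<longleftrightarrow> \<lceil>t / lam\<rceil> = n + 1" by linarith
    also have "\<dots> \<longleftrightarrow> real_of_int n < t / lam \<and> t / lam \<le> real_of_int n + 1"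
      by (simp add: ceiling_eq_iff)
    also have "\<dots> \<longleftrightarrow> real_of_int n * lam < t \<and> t \<le> (real_of_int n + 1) * lam"
      using assms by (simp add: pos_less_divide_eq pos_divide_le_eq)
    finally show ?thesis by simp
  qed
  then show ?thesis unfolding layer_def lvl_def by simp
qed

lemma ne_imp: "x \<in> B \<Longrightarrow> B \<noteq> {}" by blast
lemma sub_mem: "B \<subseteq> C \<and> P \<Longrightarrow> x \<in> B \<Longrightarrow> x \<in> C" by blast
lemma kk: "x \<in> C \<Longrightarrow> (x \<in> C \<Longrightarrow> C \<subseteq> L \<Longrightarrow> K \<Longrightarrow> C \<subseteq> S) \<Longrightarrow> B \<subseteq> C \<and> C \<subseteq> L \<and> K \<Longrightarrow> C \<subseteq> S" by blast
lemma eq_from: "C \<subseteq> B \<Longrightarrow> B \<subseteq> C \<and> P \<Longrightarrow> C = B" by blast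
lemma img: "y = B \<Longrightarrow> x \<in> V \<Longrightarrow> B \<in> f ` V \<Longrightarrow> True" by simp
context
  fixes V :: "'a set" and E :: "'a \<Rightarrow> 'a \<Rightarrow> bool" and x0 :: 'a and lam k :: real
  assumes g: "graph V E" and lam: "lam > 0"
begin

lemma lay: "layer V E x0 lam n = {x\<in>V. lvl V E x0 lam x = n}"
  by (rule layer_eq[OF lam])

lemma crel_sym: "crel V E x0 lam k n a b \<Longrightarrow> crel V E x0 lam k n b a"
proof -
  assume c: "crel V E x0 lam k n a b"
  then have "a \<in> V" "b \<in> V" unfolding crel_def lay by auto
  then show ?thesis using c gdist_sym[OF g, of a b] unfolding crel_def by simp
qed

lemma crel_rt_layer: "(crel V E x0 lam k n)\<^sup>*\<^sup>* a b \<Longrightarrow> a \<in> layer V E x0 lam n \<Longrightarrow> b \<in> layer V E x0 lam n"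
  by (induction rule: rtranclp_induct) (auto simp: crel_def)

lemma crel_rt_sym: "(crel V E x0 lam k n)\<^sup>*\<^sup>* a b \<Longrightarrow> (crel V E x0 lam k n)\<^sup>*\<^sup>* b a"
  using symp_rtranclp[of "crel V E x0 lam k n"] crel_sym unfolding symp_def by blast

lemma x_in_layer: "x \<in> V \<Longrightarrow> x \<in> layer V E x0 lam (lvl V E x0 lam x)"
  using lay by auto

lemma cls_basic: "x \<in> V \<Longrightarrow> x \<in> cls V E x0 lam k x \<and> cls V E x0 lam k x \<subseteq> layer V E x0 lam (lvl V E x0 lam x)"
  unfolding cls_def using crel_rt_layer x_in_layer by auto

lemma cls_V: "x \<in> V \<Longrightarrow> y \<in> cls V E x0 lam k x \<Longrightarrow> y \<in> V \<and> lvl V E x0 lam y = lvl V E x0 lam x"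
  using cls_basic lay by blast

lemma cls_same: "x \<in> V \<Longrightarrow> y \<in> cls V E x0 lam k x \<Longrightarrow> cls V E x0 lam k y = cls V E x0 lam k x"
proof -
  assume x: "x \<in> V" and y: "y \<in> cls V E x0 lam k x"
  let ?R = "crel V E x0 lam k (lvl V E x0 lam x)"
  have l: "lvl V E x0 lam y = lvl V E x0 lam x" using cls_V[OF x y] by simp
  have xy: "?R\<^sup>*\<^sup>* x y" using y by (simp add: cls_def)
  have "?R\<^sup>*\<^sup>* y z \<longleftrightarrow> ?R\<^sup>*\<^sup>* x z" for z
    using rtranclp_trans[OF xy, of z] rtranclp_trans[OF crel_rt_sym[OF xy], of z] by blast
  then show ?thesis unfolding cls_def l set_eq_iff mem_Collect_eq by simp
qed

lemma cls_kconn: "x \<in> V \<Longrightarrow> k_connected (gdist V E) k (cls V E x0 lam k x)"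
  unfolding k_connected_def
proof (intro ballI)
  fix y z assume x: "x \<in> V" and y: "y \<in> cls V E x0 lam k x" and z: "z \<in> cls V E x0 lam k x"
  let ?R = "crel V E x0 lam k (lvl V E x0 lam x)"
  have yz: "?R\<^sup>*\<^sup>* x y" "?R\<^sup>*\<^sup>* x z" using y z by (simp_all add: cls_def)
  have "?R\<^sup>*\<^sup>* y z" using rtranclp_trans[OF crel_rt_sym[OF yz(1)] yz(2)] .
  from rtranclp_list[OF this] obtain xs where xs: "xs\<noteq>[]" "hd xs = y" "last xs = z"
     "\<forall>i. Suc i < length xs \<longrightarrow> ?R (xs!i) (xs!Suc i)" "set xs \<subseteq> {c. ?R\<^sup>*\<^sup>* y c}" by blast
  have s1: "set xs \<subseteq> cls V E x0 lam k x"
  proof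
    fix c assume "c \<in> set xs"
    then have "?R\<^sup>*\<^sup>* y c" using xs(5) by blast
    then show "c \<in> cls V E x0 lam k x" unfolding cls_def using rtranclp_trans[OF yz(1)] by simp
  qed
  have s2: "\<forall>i. Suc i < length xs \<longrightarrow> real (gdist V E (xs ! i) (xs ! Suc i)) \<le> k"
    using xs(4) unfolding crel_def by blast
  show "\<exists>xs. xs \<noteq> [] \<and> hd xs = y \<and> last xs = z \<and> set xs \<subseteq> cls V E x0 lam k x \<and>
      (\<forall>i. Suc i < length xs \<longrightarrow> real (gdist V E (xs ! i) (xs ! Suc i)) \<le> k)"
    by (rule exI[of _ xs]) (use xs(1,2,3) s1 s2 in blast)
qed

lemma kconn_sub_cls:
  assumes "x \<in> C" "C \<subseteq> layer V E x0 lam n" "k_connected (gdist V E) k C"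
  shows "C \<subseteq> cls V E x0 lam k x"
proof
  fix c assume c: "c \<in> C"
  have n: "n = lvl V E x0 lam x" using assms lay by auto
  obtain xs where xs: "xs \<noteq> []" "hd xs = x" "last xs = c" "set xs \<subseteq> C"
     "\<forall>i. Suc i < length xs \<longrightarrow> real (gdist V E (xs ! i) (xs ! Suc i)) \<le> k"
    using assms(3) c assms(1) unfolding k_connected_def by blast
  have "(\<lambda>a b. a \<in> layer V E x0 lam n \<and> b \<in> layer V E x0 lam n \<and> real (gdist V E a b) \<le> k)\<^sup>*\<^sup>* (hd xs) (last xs)"
    using list_rtranclp[OF xs(1) _ xs(5)] xs(4) assms(2) by blast
  then show "c \<in> cls V E x0 lam k x" unfolding cls_def crel_def[abs_def] n using xs by simp
qed

lemma blocks_eq: "blocks V E x0 lam k = cls V E x0 lam k ` V"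
proof
  show "cls V E x0 lam k ` V \<subseteq> blocks V E x0 lam k"
  proof
    fix B assume "B \<in> cls V E x0 lam k ` V"
    then obtain x where x: "x \<in> V" "B = cls V E x0 lam k x" by blast
    have xB: "x \<in> B" and Bl: "B \<subseteq> layer V E x0 lam (lvl V E x0 lam x)"
      using cls_basic[OF x(1)] x(2) by simp_all
    have kc: "k_connected (gdist V E) k B" using cls_kconn[OF x(1)] x(2) by simp
    show "B \<in> blocks V E x0 lam k"
      unfolding blocks_def
    proof (intro CollectI conjI exI allI impI)
      show "B \<noteq> {}" using xB by (rule ne_imp)
      show "B \<subseteq> layer V E x0 lam (lvl V E x0 lam x)" by (rule Bl)
      show "k_connected (gdist V E) k B" by (rule kc)
      fix C assume C: "B \<subseteq> C \<and> C \<subseteq> layer V E x0 lam (lvl V E x0 lam x) \<and> k_connected (gdist V E) k C"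
      have "x \<in> C" using C xB by (rule sub_mem)
      then have "C \<subseteq> cls V E x0 lam k x" using kconn_sub_cls[of x C] C by (rule kk)
      then have "C \<subseteq> B" using x(2) by simp
      then show "C = B" using C by (rule eq_from)
    qed
  qed
next
  show "blocks V E x0 lam k \<subseteq> cls V E x0 lam k ` V"
  proof
    fix B assume "B \<in> blocks V E x0 lam k"
    then obtain n where B: "B \<noteq> {}" "B \<subseteq> layer V E x0 lam n" "k_connected (gdist V E) k B"
      "\<And>C. B \<subseteq> C \<and> C \<subseteq> layer V E x0 lam n \<and> k_connected (gdist V E) k C \<Longrightarrow> C = B"
      unfolding blocks_def by blast
    then obtain x where x: "x \<in> B" by blast
    have "x \<in> layer V E x0 lam n" using x B(2) by (rule subsetD[rotated])
    then have xV: "x \<in> V" and n: "n = lvl V E x0 lam x" unfolding lay by simp_all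
    have sub: "B \<subseteq> cls V E x0 lam k x" using kconn_sub_cls[OF x B(2,3)] .
    have "cls V E x0 lam k x \<subseteq> layer V E x0 lam n" using cls_basic[OF xV] n by simp
    then have "cls V E x0 lam k x = B" using B(4)[of "cls V E x0 lam k x"] sub cls_kconn[OF xV] by simp
    then show "B \<in> cls V E x0 lam k ` V" using xV by (metis image_eqI)
  qed
qed

lemma skel_map_eq: "x \<in> V \<Longrightarrow> skel_map V E x0 lam k x = cls V E x0 lam k x"
  unfolding skel_map_def
proof (rule the_equality)
  assume x: "x \<in> V"
  show "cls V E x0 lam k x \<in> blocks V E x0 lam k \<and> x \<in> cls V E x0 lam k x"
    unfolding blocks_eq using cls_basic[OF x] x by simp
  fix B assume B: "B \<in> blocks V E x0 lam k \<and> x \<in> B"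
  then obtain z where z: "z \<in> V" "B = cls V E x0 lam k z" unfolding blocks_eq by (meson imageE)
  then show "B = cls V E x0 lam k x" using cls_same[OF z(1), of x] B by simp
qed

lemma sm_basic: "x \<in> V \<Longrightarrow> skel_map V E x0 lam k x \<in> blocks V E x0 lam k \<and> x \<in> skel_map V E x0 lam k x"
  unfolding blocks_eq using skel_map_eq cls_basic by simp

lemma sm_of_block: "B \<in> blocks V E x0 lam k \<Longrightarrow> x \<in> B \<Longrightarrow> x \<in> V \<and> skel_map V E x0 lam k x = B"
proof -
  assume B: "B \<in> blocks V E x0 lam k" and x: "x \<in> B"
  obtain z where z: "z \<in> V" "B = cls V E x0 lam k z" using B blocks_eq by blast
  have xV: "x \<in> V" using cls_V[OF z(1)] x z(2) by blast
  have "cls V E x0 lam k x = B" using cls_same[OF z(1)] x z(2) by blast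
  then show ?thesis using skel_map_eq[OF xV] xV by simp
qed

lemma sm_eq_iff: "x \<in> V \<Longrightarrow> y \<in> V \<Longrightarrow> skel_map V E x0 lam k x = skel_map V E x0 lam k y \<longleftrightarrow>
    (crel V E x0 lam k (lvl V E x0 lam x))\<^sup>*\<^sup>* x y"
proof -
  assume x: "x \<in> V" and y: "y \<in> V"
  have "cls V E x0 lam k x = cls V E x0 lam k y \<longleftrightarrow> y \<in> cls V E x0 lam k x"
    using cls_same[OF x, of y] cls_basic[OF y] by auto
  then show ?thesis using skel_map_eq[OF x] skel_map_eq[OF y] by (simp add: cls_def)
qed

lemma sm_close: "x \<in> V \<Longrightarrow> y \<in> V \<Longrightarrow> lvl V E x0 lam x = lvl V E x0 lam y \<Longrightarrow> real (gdist V E x y) \<le> k \<Longrightarrow>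
   skel_map V E x0 lam k x = skel_map V E x0 lam k y"
proof -
  assume x: "x \<in> V" and y: "y \<in> V" and l: "lvl V E x0 lam x = lvl V E x0 lam y" and d: "real (gdist V E x y) \<le> k"
  have "crel V E x0 lam k (lvl V E x0 lam x) x y"
    unfolding crel_def using x_in_layer[OF x] x_in_layer[OF y] l d by simp
  then show ?thesis using sm_eq_iff[OF x y] by blast
qed

end

lemma walk_invariant:
  fixes w :: "nat \<Rightarrow> 'a" and f :: "'a \<Rightarrow> int" and Q :: "'a \<Rightarrow> bool"
  assumes step: "\<And>s. s < t \<Longrightarrow> \<bar>f (w (Suc s)) - f (w s)\<bar> \<le> 1"
    and lohi: "lo < hi"
    and start: "lo < f (w 0)" "f (w 0) \<le> hi" "Q (w 0)"
    and P1: "\<And>s. s < t \<Longrightarrow> lo < f (w s) \<Longrightarrow> f (w s) \<le> hi \<Longrightarrow> lo < f (w (Suc s)) \<Longrightarrow> f (w (Suc s)) \<le> hi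
              \<Longrightarrow> Q (w s) \<Longrightarrow> Q (w (Suc s))"
    and P2: "\<And>i j. i \<le> j \<Longrightarrow> j \<le> t \<Longrightarrow> f (w i) = f (w j) \<Longrightarrow> Q (w i) \<Longrightarrow> Q (w j)"
  shows "j \<le> t \<Longrightarrow> (lo < f (w j) \<and> f (w j) \<le> hi \<longrightarrow> Q (w j)) \<and>
     (f (w j) \<le> lo \<longrightarrow> (\<exists>i\<le>j. f (w i) = lo + 1 \<and> Q (w i))) \<and>
     (hi < f (w j) \<longrightarrow> (\<exists>i\<le>j. f (w i) = hi \<and> Q (w i)))"
proof (induction j)
  case 0 then show ?case using start by auto
next
  case (Suc j)
  then have jt: "j < t" by simp
  have IH: "(lo < f (w j) \<and> f (w j) \<le> hi \<longrightarrow> Q (w j)) \<and>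
     (f (w j) \<le> lo \<longrightarrow> (\<exists>i\<le>j. f (w i) = lo + 1 \<and> Q (w i))) \<and>
     (hi < f (w j) \<longrightarrow> (\<exists>i\<le>j. f (w i) = hi \<and> Q (w i)))" using Suc by simp
  have st: "\<bar>f (w (Suc j)) - f (w j)\<bar> \<le> 1" using step jt by simp
  show ?case
  proof (intro conjI impI)
    assume in1: "lo < f (w (Suc j)) \<and> f (w (Suc j)) \<le> hi"
    consider "lo < f (w j) \<and> f (w j) \<le> hi" | "f (w j) \<le> lo" | "hi < f (w j)" by linarith
    then show "Q (w (Suc j))"
    proof cases
      case 1 then show ?thesis using P1[OF jt] in1 IH by blast
    next
      case 2
      then obtain i where i: "i \<le> j" "f (w i) = lo + 1" "Q (w i)" using IH by blast
      have "f (w (Suc j)) = lo + 1" using 2 in1 st by linarith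
      then show ?thesis using P2[of i "Suc j"] i Suc.prems by simp
    next
      case 3
      then obtain i where i: "i \<le> j" "f (w i) = hi" "Q (w i)" using IH by blast
      have "f (w (Suc j)) = hi" using 3 in1 st by linarith
      then show ?thesis using P2[of i "Suc j"] i Suc.prems by simp
    qed
  next
    assume b: "f (w (Suc j)) \<le> lo"
    consider "lo < f (w j) \<and> f (w j) \<le> hi" | "f (w j) \<le> lo" using b st lohi by linarith
    then show "\<exists>i\<le>Suc j. f (w i) = lo + 1 \<and> Q (w i)"
    proof cases
      case 1
      then have "f (w j) = lo + 1" using b st by linarith
      then show ?thesis using IH 1 by (intro exI[of _ j]) simp
    next
      case 2 then show ?thesis using IH le_SucI by blast
    qed
  next
    assume b: "hi < f (w (Suc j))"
    consider "lo < f (w j) \<and> f (w j) \<le> hi" | "hi < f (w j)" using b st lohi by linarith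
    then show "\<exists>i\<le>Suc j. f (w i) = hi \<and> Q (w i)"
    proof cases
      case 1
      then have "f (w j) = hi" using b st by linarith
      then show ?thesis using IH 1 by (intro exI[of _ j]) simp
    next
      case 2 then show ?thesis using IH le_SucI by blast
    qed
  qed
qed

lemma ceil_nest:
  assumes "N \<ge> (1::nat)"
  shows "\<lceil>real_of_int \<lceil>t\<rceil> / real N\<rceil> = \<lceil>t / real N\<rceil>"
proof -
  have Np: "real N > 0" using assms by simp
  have "\<lceil>real_of_int \<lceil>t\<rceil> / real N\<rceil> \<le> c \<longleftrightarrow> \<lceil>t / real N\<rceil> \<le> c" for c
  proof -
    have "\<lceil>real_of_int \<lceil>t\<rceil> / real N\<rceil> \<le> c \<longleftrightarrow> real_of_int \<lceil>t\<rceil> \<le> real_of_int c * real N"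
      using Np by (simp add: ceiling_le_iff pos_divide_le_eq)
    also have "\<dots> \<longleftrightarrow> \<lceil>t\<rceil> \<le> c * int N"
      by (metis of_int_le_iff of_int_mult of_int_of_nat_eq)
    also have "\<dots> \<longleftrightarrow> t \<le> real_of_int (c * int N)" by (simp add: ceiling_le_iff)
    also have "\<dots> \<longleftrightarrow> \<lceil>t / real N\<rceil> \<le> c"
      using Np by (simp add: ceiling_le_iff pos_divide_le_eq)
    finally show ?thesis .
  qed
  then show ?thesis by (meson antisym order_refl)
qed

context
  fixes V :: "'a set" and E :: "'a \<Rightarrow> 'a \<Rightarrow> bool" and x0 :: 'a and lam k :: real and N :: nat
  assumes g: "graph V E" and cg: "connected_graph V E" and x0: "x0 \<in> V"
    and lam: "lam \<ge> 1" and k: "k \<ge> 1" and N: "N \<ge> 1"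
begin

abbreviation "D x \<equiv> gdist V E x x0"
definition "ell x = \<lceil>real (D x) / lam\<rceil>"
abbreviation "S1 \<equiv> skel_map V E x0 lam k"
abbreviation "Vb \<equiv> blocks V E x0 lam k"
abbreviation "Eb \<equiv> skel_E V E x0 lam k"
abbreviation "B0 \<equiv> S1 x0"
abbreviation "SN \<equiv> skel_map V E x0 (real N * lam) k"
abbreviation "S2 \<equiv> skel_map Vb Eb B0 (real N) 1"

lemma lam0: "lam > 0" using lam by simp
lemma Nlam0: "real N * lam > 0" using lam N by simp
lemma N0: "real N > 0" using N by simp

lemma path_ex: "a \<in> V \<Longrightarrow> b \<in> V \<Longrightarrow> \<exists>n. (E ^^ n) a b"
proof -
  assume a: "a \<in> V" and b: "b \<in> V"
  obtain xs where xs: "walk V E xs" "hd xs = a" "last xs = b"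
    using cg a b unfolding connected_graph_def by blast
  have "length xs = Suc (length xs - 1)" using xs(1) unfolding walk_def by (cases xs) auto
  then have "(E ^^ (length xs - 1)) a b" using walk_iff_relpowp[OF g a, of b "length xs - 1"] xs by metis
  then show ?thesis by blast
qed

lemma D_path: "x \<in> V \<Longrightarrow> (E ^^ D x) x x0"
proof -
  assume x: "x \<in> V"
  obtain n where "(E ^^ n) x x0" using path_ex[OF x x0] by blast
  from gdist_le(2)[OF g x this] show ?thesis .
qed

lemma D_edge: "E a b \<Longrightarrow> D a \<le> D b + 1"
proof -
  assume e: "E a b"
  have ab: "a \<in> V" "b \<in> V" using graph_V[OF g e] by auto
  have "(E ^^ Suc (D b)) a x0" using relpowp_Suc_I2[OF e D_path[OF ab(2)]] .
  then show ?thesis using gdist_le(1)[OF g ab(1)] by fastforce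
qed

lemma D_x0: "D x0 = 0" using gdist_refl[OF g x0] .

lemma geodesic: "x \<in> V \<Longrightarrow> x \<noteq> x0 \<Longrightarrow> \<exists>y. E x y \<and> D y + 1 = D x"
proof -
  assume x: "x \<in> V" "x \<noteq> x0"
  have p: "(E ^^ D x) x x0" using D_path[OF x(1)] .
  obtain m where m: "D x = Suc m" using p x(2) by (cases "D x") auto
  then obtain y where y: "E x y" "(E ^^ m) y x0" using p relpowp_Suc_D2 by metis
  have yV: "y \<in> V" using graph_V[OF g y(1)] by simp
  have "D y \<le> m" using gdist_le(1)[OF g yV y(2)] .
  moreover have "D x \<le> D y + 1" using D_edge[OF y(1)] .
  ultimately show ?thesis using y(1) m by (intro exI[of _ y]) simp
qed

lemma ell_edge: "E a b \<Longrightarrow> ell a \<le> ell b + 1"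
proof -
  assume e: "E a b"
  have "real (D a) \<le> real (D b) + 1" using D_edge[OF e] by linarith
  then have "real (D a) / lam \<le> (real (D b) + 1) / lam" using lam0 by (simp add: divide_right_mono)
  also have "\<dots> \<le> real (D b) / lam + 1" using lam by (simp add: add_divide_distrib)
  finally have "\<lceil>real (D a) / lam\<rceil> \<le> \<lceil>real (D b) / lam + 1\<rceil>" by (rule ceiling_mono)
  then show ?thesis unfolding ell_def by simp
qed

lemma ell_edge_abs: "E a b \<Longrightarrow> \<bar>ell b - ell a\<bar> \<le> 1"
  using ell_edge[of a b] ell_edge[of b a] graph_sym[OF g] by fastforce

lemma ell_x0: "ell x0 = 0" unfolding ell_def D_x0 by simp

lemma lvl1: "lvl V E x0 lam x = ell x - 1" unfolding lvl_def ell_def ..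

lemma lvlN: "lvl V E x0 (real N * lam) x = \<lceil>real_of_int (ell x) / real N\<rceil> - 1"
proof -
  have "real (D x) / (real N * lam) = (real (D x) / lam) / real N" by simp
  then show ?thesis unfolding lvl_def ell_def using ceil_nest[OF N] by (simp add: mult.commute)
qed

lemma S1_basic: "x \<in> V \<Longrightarrow> S1 x \<in> Vb \<and> x \<in> S1 x" using sm_basic[OF g lam0] .

lemma S1_same_ell: "z \<in> V \<Longrightarrow> x \<in> S1 z \<Longrightarrow> x \<in> V \<and> ell x = ell z \<and> S1 x = S1 z"
proof -
  assume z: "z \<in> V" and x: "x \<in> S1 z"
  have "x \<in> V \<and> lvl V E x0 lam x = lvl V E x0 lam z" using cls_V[OF g lam0 z] x skel_map_eq[OF g lam0 z] by simp
  moreover have "S1 x = S1 z" using sm_of_block[OF g lam0 _ x] S1_basic[OF z] by blast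
  ultimately show ?thesis unfolding lvl1 by simp
qed

lemma gb: "graph Vb Eb"
  unfolding graph_def skel_E_def using graph_sym[OF g] by blast

lemma S1_edge: "E a b \<Longrightarrow> S1 a = S1 b \<or> Eb (S1 a) (S1 b)"
proof -
  assume e: "E a b"
  have ab: "a \<in> V" "b \<in> V" using graph_V[OF g e] by auto
  show ?thesis unfolding skel_E_def using S1_basic[OF ab(1)] S1_basic[OF ab(2)] e by blast
qed

lemma Eb_D: "Eb B C \<Longrightarrow> \<exists>a b. E a b \<and> B = S1 a \<and> C = S1 b"
proof -
  assume "Eb B C"
  then obtain a b where "B \<in> Vb" "C \<in> Vb" "a \<in> B" "b \<in> C" "E a b" unfolding skel_E_def by blast
  then show ?thesis using sm_of_block[OF g lam0] by metis
qed

lemma Db_upper: "x \<in> V \<Longrightarrow> \<exists>n. (Eb ^^ n) (S1 x) B0 \<and> int n \<le> ell x"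
proof (induction "D x" arbitrary: x rule: less_induct)
  case less
  show ?case
  proof (cases "x = x0")
    case True then show ?thesis using ell_x0 by (intro exI[of _ 0]) simp
  next
    case False
    obtain y where y: "E x y" "D y + 1 = D x" using geodesic[OF less.prems False] by blast
    have yV: "y \<in> V" using graph_V[OF g y(1)] by simp
    obtain n where n: "(Eb ^^ n) (S1 y) B0" "int n \<le> ell y" using less.hyps[of y] y(2) yV by auto
    have le: "ell y \<le> ell x" unfolding ell_def using y(2) lam0
      by (intro ceiling_mono divide_right_mono) auto
    have le2: "ell x \<le> ell y + 1" using ell_edge[OF y(1)] .
    show ?thesis
    proof (cases "ell y = ell x")
      case True
      have "gdist V E x y \<le> 1" using gdist_edge[OF g y(1)] .
      then have "S1 x = S1 y" using sm_close[OF g lam0 less.prems yV, where ?x0.0 = x0 and ?k = k] True k unfolding lvl1 by simp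
      then show ?thesis using n True by auto
    next
      case False
      then have ee: "ell x = ell y + 1" using le le2 by simp
      consider "S1 x = S1 y" | "Eb (S1 x) (S1 y)" using S1_edge[OF y(1)] by blast
      then show ?thesis
      proof cases
        case 1 then show ?thesis using n ee by (intro exI[of _ n]) simp
      next
        case 2 then show ?thesis using n ee relpowp_Suc_I2[OF 2 n(1)] by (intro exI[of _ "Suc n"]) simp
      qed
    qed
  qed
qed

lemma Db_lower: "(Eb ^^ n) B B0 \<Longrightarrow> B \<in> Vb \<Longrightarrow> x \<in> B \<Longrightarrow> ell x \<le> int n"
proof (induction n arbitrary: B x)
  case 0
  then have "x \<in> S1 x0" by simp
  then show ?case using S1_same_ell[OF x0] ell_x0 by simp
next
  case (Suc n)
  obtain C where C: "Eb B C" "(Eb ^^ n) C B0" using relpowp_Suc_D2[OF Suc.prems(1)] by blast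
  obtain a b where ab: "E a b" "B = S1 a" "C = S1 b" using Eb_D[OF C(1)] by blast
  have abV: "a \<in> V" "b \<in> V" using graph_V[OF g ab(1)] by auto
  have "ell b \<le> int n" using Suc.IH[OF C(2), of b] S1_basic[OF abV(2)] ab(3) by simp
  moreover have "ell a \<le> ell b + 1" using ell_edge[OF ab(1)] .
  moreover have "ell x = ell a" using S1_same_ell[OF abV(1)] Suc.prems(3) ab(2) by simp
  ultimately show ?case by simp
qed

lemma Db_eq: "x \<in> V \<Longrightarrow> int (gdist Vb Eb (S1 x) B0) = ell x"
proof -
  assume x: "x \<in> V"
  obtain n where n: "(Eb ^^ n) (S1 x) B0" "int n \<le> ell x" using Db_upper[OF x] by blast
  have "gdist Vb Eb (S1 x) B0 \<le> n" using gdist_le(1)[OF gb _ n(1)] S1_basic[OF x] by simp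
  moreover have "(Eb ^^ gdist Vb Eb (S1 x) B0) (S1 x) B0" using gdist_le(2)[OF gb _ n(1)] S1_basic[OF x] by simp
  then have "ell x \<le> int (gdist Vb Eb (S1 x) B0)" using Db_lower S1_basic[OF x] by blast
  ultimately show ?thesis using n(2) by linarith
qed

lemma lvl2: "x \<in> V \<Longrightarrow> lvl Vb Eb B0 (real N) (S1 x) = \<lceil>real_of_int (ell x) / real N\<rceil> - 1"
proof -
  assume x: "x \<in> V"
  have "real (gdist Vb Eb (S1 x) B0) = real_of_int (ell x)" using Db_eq[OF x] by (metis of_int_of_nat_eq)
  then show ?thesis unfolding lvl_def by simp
qed

lemma Eb_reach: "B \<in> Vb \<Longrightarrow> C \<in> Vb \<Longrightarrow> \<exists>n. (Eb ^^ n) B C"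
proof -
  assume B: "B \<in> Vb" and C: "C \<in> Vb"
  obtain x y where xy: "x \<in> V" "y \<in> V" "B = S1 x" "C = S1 y"
    using B C blocks_eq[OF g lam0] skel_map_eq[OF g lam0] by (metis imageE)
  obtain n m where "(Eb ^^ n) B B0" "(Eb ^^ m) C B0" using Db_upper xy by metis
  then have "(Eb ^^ n) B B0" "(Eb ^^ m) B0 C" using relpowp_sym[of Eb, OF graph_sym[OF gb]] by auto
  then have "(Eb ^^ (n + m)) B C" unfolding relpowp_add by blast
  then show ?thesis by blast
qed

lemma close2: "B \<in> Vb \<Longrightarrow> C \<in> Vb \<Longrightarrow> real (gdist Vb Eb B C) \<le> 1 \<Longrightarrow> B = C \<or> Eb B C"
proof -
  assume B: "B \<in> Vb" and C: "C \<in> Vb" and d: "real (gdist Vb Eb B C) \<le> 1"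
  obtain n where "(Eb ^^ n) B C" using Eb_reach[OF B C] by blast
  then have p: "(Eb ^^ gdist Vb Eb B C) B C" using gdist_le(2)[OF gb B] by blast
  have "gdist Vb Eb B C = 0 \<or> gdist Vb Eb B C = 1" using d by linarith
  then show ?thesis using p by auto
qed

lemma crel_mono: "crel V E x0 lam k (lvl V E x0 lam x) a b \<Longrightarrow>
    crel V E x0 (real N * lam) k (lvl V E x0 (real N * lam) x) a b"
  unfolding crel_def layer_eq[OF lam0] layer_eq[OF Nlam0] lvlN lvl1 by auto

lemma mono1: "x \<in> V \<Longrightarrow> z \<in> S1 x \<Longrightarrow> (crel V E x0 (real N * lam) k (lvl V E x0 (real N * lam) x))\<^sup>*\<^sup>* x z"
proof -
  assume x: "x \<in> V" and z: "z \<in> S1 x"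
  have zV: "z \<in> V" "S1 z = S1 x" using S1_same_ell[OF x z] by auto
  have "(crel V E x0 lam k (lvl V E x0 lam x))\<^sup>*\<^sup>* x z"
    using sm_eq_iff[OF g lam0 x zV(1), where ?x0.0 = x0 and ?k = k] zV(2) by simp
  then show ?thesis
    by (induction rule: rtranclp_induct) (auto intro: rtranclp.rtrancl_into_rtrancl crel_mono)
qed

lemma ceil_layer: "\<lceil>real_of_int l / real N\<rceil> = M \<longleftrightarrow> int N * (M - 1) < l \<and> l \<le> int N * M"
proof -
  have "\<lceil>real_of_int l / real N\<rceil> = M \<longleftrightarrow> real_of_int M - 1 < real_of_int l / real N \<and> real_of_int l / real N \<le> real_of_int M"
    by (simp add: ceiling_eq_iff)
  also have "\<dots> \<longleftrightarrow> (real_of_int M - 1) * real N < real_of_int l \<and> real_of_int l \<le> real_of_int M * real N"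
    using N0 by (simp add: pos_less_divide_eq pos_divide_le_eq)
  also have "\<dots> \<longleftrightarrow> real_of_int (int N * (M - 1)) < real_of_int l \<and> real_of_int l \<le> real_of_int (int N * M)"
    by (simp add: algebra_simps)
  also have "\<dots> \<longleftrightarrow> int N * (M - 1) < l \<and> l \<le> int N * M" by (simp only: of_int_less_iff of_int_le_iff)
  finally show ?thesis .
qed

lemma lay2: "C \<in> layer Vb Eb B0 (real N) n \<longleftrightarrow> C \<in> Vb \<and> lvl Vb Eb B0 (real N) C = n"
  by (simp add: layer_eq[OF N0])

lemma layN: "z \<in> layer V E x0 (real N * lam) n \<longleftrightarrow> z \<in> V \<and> lvl V E x0 (real N * lam) z = n"
  by (simp add: layer_eq[OF Nlam0])

lemma dir1:
  assumes x: "x \<in> V"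
  shows "(crel Vb Eb B0 (real N) 1 (lvl Vb Eb B0 (real N) (S1 x)))\<^sup>*\<^sup>* (S1 x) C \<Longrightarrow>
    C \<in> Vb \<and> (\<forall>z\<in>C. (crel V E x0 (real N * lam) k (lvl V E x0 (real N * lam) x))\<^sup>*\<^sup>* x z)"
proof (induction rule: rtranclp_induct)
  case base
  then show ?case using S1_basic[OF x] mono1[OF x] by blast
next
  case (step B C)
  let ?RN = "crel V E x0 (real N * lam) k (lvl V E x0 (real N * lam) x)"
  have BC: "B \<in> Vb" "C \<in> Vb" "lvl Vb Eb B0 (real N) B = lvl Vb Eb B0 (real N) (S1 x)"
     "lvl Vb Eb B0 (real N) C = lvl Vb Eb B0 (real N) (S1 x)" "real (gdist Vb Eb B C) \<le> 1"
    using step(2) unfolding crel_def lay2 by auto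
  consider "B = C" | "Eb B C" using close2[OF BC(1,2,5)] by blast
  then show ?case
  proof cases
    case 1 then show ?thesis using step(3) by simp
  next
    case 2
    obtain a b where ab: "E a b" "B = S1 a" "C = S1 b" using Eb_D[OF 2] by blast
    have abV: "a \<in> V" "b \<in> V" using graph_V[OF g ab(1)] by auto
    have xa: "?RN\<^sup>*\<^sup>* x a" using step(3) S1_basic[OF abV(1)] ab(2) by blast
    have la: "lvl V E x0 (real N * lam) a = lvl V E x0 (real N * lam) x"
      using BC(3) ab(2) lvl2[OF abV(1)] lvl2[OF x] lvlN by simp
    have lb: "lvl V E x0 (real N * lam) b = lvl V E x0 (real N * lam) x"
      using BC(4) ab(3) lvl2[OF abV(2)] lvl2[OF x] lvlN by simp
    have "real (gdist V E a b) \<le> k" using gdist_edge[OF g ab(1)] k by linarith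
    then have "?RN a b" unfolding crel_def layN using abV la lb by simp
    then have xb: "?RN\<^sup>*\<^sup>* x b" using xa by (rule rtranclp.rtrancl_into_rtrancl[rotated])
    have "\<forall>z\<in>C. ?RN\<^sup>*\<^sup>* x z"
    proof
      fix z assume "z \<in> C"
      then have "(crel V E x0 (real N * lam) k (lvl V E x0 (real N * lam) b))\<^sup>*\<^sup>* b z"
        using mono1[OF abV(2)] ab(3) by simp
      then show "?RN\<^sup>*\<^sup>* x z" using lb xb by simp
    qed
    then show ?thesis using BC(2) by simp
  qed
qed

lemma dir2:
  assumes x: "x \<in> V"
  shows "(crel V E x0 (real N * lam) k (lvl V E x0 (real N * lam) x))\<^sup>*\<^sup>* x y \<Longrightarrow>
     (crel Vb Eb B0 (real N) 1 (lvl Vb Eb B0 (real N) (S1 x)))\<^sup>*\<^sup>* (S1 x) (S1 y)"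
proof (induction rule: rtranclp_induct)
  case base then show ?case by simp
next
  case (step u v)
  let ?R2 = "crel Vb Eb B0 (real N) 1 (lvl Vb Eb B0 (real N) (S1 x))"
  define M where "M = \<lceil>real_of_int (ell x) / real N\<rceil>"
  have uv: "u \<in> V" "v \<in> V" "lvl V E x0 (real N * lam) u = lvl V E x0 (real N * lam) x"
     "lvl V E x0 (real N * lam) v = lvl V E x0 (real N * lam) x" "real (gdist V E u v) \<le> k"
    using step(2) unfolding crel_def layN by auto
  define t where "t = gdist V E u v"
  obtain n where "(E ^^ n) u v" using path_ex[OF uv(1,2)] by blast
  then have "(E ^^ t) u v" unfolding t_def using gdist_le(2)[OF g uv(1)] by blast
  then obtain w where w: "w 0 = u" "w t = v" "\<And>i. i < t \<Longrightarrow> E (w i) (w (Suc i))"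
    unfolding relpowp_fun_conv by blast
  have wV: "w s \<in> V" if "s \<le> t" for s
  proof (cases s)
    case 0 then show ?thesis using w uv by simp
  next
    case (Suc j) then have "E (w j) (w s)" using w that by simp
    then show ?thesis using graph_V[OF g] by blast
  qed
  have inl: "\<And>z. z \<in> V \<Longrightarrow> lvl V E x0 (real N * lam) z = lvl V E x0 (real N * lam) x \<longleftrightarrow>
      int N * (M - 1) < ell z \<and> ell z \<le> int N * M"
    unfolding lvlN M_def[symmetric] using ceil_layer by simp
  have lvl2w: "\<And>s. s \<le> t \<Longrightarrow> int N * (M - 1) < ell (w s) \<and> ell (w s) \<le> int N * M \<Longrightarrow>
      S1 (w s) \<in> layer Vb Eb B0 (real N) (lvl Vb Eb B0 (real N) (S1 x))"
  proof -
    fix s assume s: "s \<le> t" "int N * (M - 1) < ell (w s) \<and> ell (w s) \<le> int N * M"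
    have "\<lceil>real_of_int (ell (w s)) / real N\<rceil> = M" using ceil_layer s(2) by simp
    then show "S1 (w s) \<in> layer Vb Eb B0 (real N) (lvl Vb Eb B0 (real N) (S1 x))"
      unfolding lay2 using lvl2[OF wV[OF s(1)]] lvl2[OF x] S1_basic[OF wV[OF s(1)]] M_def by simp
  qed
  have inv: "(int N * (M - 1) < ell (w t) \<and> ell (w t) \<le> int N * M \<longrightarrow> ?R2\<^sup>*\<^sup>* (S1 x) (S1 (w t))) \<and>
     (ell (w t) \<le> int N * (M - 1) \<longrightarrow> (\<exists>i\<le>t. ell (w i) = int N * (M - 1) + 1 \<and> ?R2\<^sup>*\<^sup>* (S1 x) (S1 (w i)))) \<and>
     (int N * M < ell (w t) \<longrightarrow> (\<exists>i\<le>t. ell (w i) = int N * M \<and> ?R2\<^sup>*\<^sup>* (S1 x) (S1 (w i))))"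
  proof (rule walk_invariant[where f = ell and Q = "\<lambda>z. ?R2\<^sup>*\<^sup>* (S1 x) (S1 z)"])
    show "\<And>s. s < t \<Longrightarrow> \<bar>ell (w (Suc s)) - ell (w s)\<bar> \<le> 1" using ell_edge_abs w(3) by blast
    show "int N * (M - 1) < int N * M" using N by (simp add: algebra_simps)
    show "int N * (M - 1) < ell (w 0)" "ell (w 0) \<le> int N * M" using inl[OF uv(1)] uv(3) w(1) by auto
    show "?R2\<^sup>*\<^sup>* (S1 x) (S1 (w 0))" using step(3) w(1) by simp
    show "?R2\<^sup>*\<^sup>* (S1 x) (S1 (w (Suc s)))"
      if "s < t" "int N * (M - 1) < ell (w s)" "ell (w s) \<le> int N * M"
         "int N * (M - 1) < ell (w (Suc s))" "ell (w (Suc s)) \<le> int N * M" "?R2\<^sup>*\<^sup>* (S1 x) (S1 (w s))" for s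
    proof -
      have e: "E (w s) (w (Suc s))" using w(3) that(1) by simp
      consider "S1 (w s) = S1 (w (Suc s))" | "Eb (S1 (w s)) (S1 (w (Suc s)))" using S1_edge[OF e] by blast
      then show ?thesis
      proof cases
        case 1 then show ?thesis using that(6) by simp
      next
        case 2
        have "?R2 (S1 (w s)) (S1 (w (Suc s)))" unfolding crel_def
          using lvl2w[of s] lvl2w[of "Suc s"] that gdist_edge[OF gb 2] by simp
        then show ?thesis using that(6) by (rule rtranclp.rtrancl_into_rtrancl[rotated])
      qed
    qed
    show "?R2\<^sup>*\<^sup>* (S1 x) (S1 (w j))" if "i \<le> j" "j \<le> t" "ell (w i) = ell (w j)" "?R2\<^sup>*\<^sup>* (S1 x) (S1 (w i))" for i j
    proof -
      have "(E ^^ (j - i)) (w i) (w j)" unfolding relpowp_fun_conv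
        by (rule exI[of _ "\<lambda>s. w (i + s)"]) (use that w(3) in auto)
      then have "gdist V E (w i) (w j) \<le> j - i" using gdist_le(1)[OF g wV] that by simp
      then have "real (gdist V E (w i) (w j)) \<le> k" using uv(5) that unfolding t_def by linarith
      then have "S1 (w i) = S1 (w j)"
        using sm_close[OF g lam0 wV wV, where ?x0.0 = x0 and ?k = k] that unfolding lvl1 by simp
      then show ?thesis using that(4) by simp
    qed
  qed simp
  then show ?case using inl[OF uv(2)] uv(4) w(2) by auto
qed

lemma claim1:
  assumes x: "x \<in> V" and y: "y \<in> V"
  shows "SN x = SN y \<longleftrightarrow> S2 (S1 x) = S2 (S1 y)"
proof -
  have e1: "SN x = SN y \<longleftrightarrow> (crel V E x0 (real N * lam) k (lvl V E x0 (real N * lam) x))\<^sup>*\<^sup>* x y"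
    using sm_eq_iff[OF g Nlam0 x y, where ?x0.0 = x0 and ?k = k] .
  have e2: "S2 (S1 x) = S2 (S1 y) \<longleftrightarrow> (crel Vb Eb B0 (real N) 1 (lvl Vb Eb B0 (real N) (S1 x)))\<^sup>*\<^sup>* (S1 x) (S1 y)"
    using sm_eq_iff[OF gb N0 conjunct1[OF S1_basic[OF x]] conjunct1[OF S1_basic[OF y]], where ?x0.0 = B0 and ?k = 1] .
  show ?thesis
  proof
    assume "SN x = SN y"
    then show "S2 (S1 x) = S2 (S1 y)" using e1 e2 dir2[OF x] by simp
  next
    assume "S2 (S1 x) = S2 (S1 y)"
    then have "(crel Vb Eb B0 (real N) 1 (lvl Vb Eb B0 (real N) (S1 x)))\<^sup>*\<^sup>* (S1 x) (S1 y)" using e2 by simp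
    then have "\<forall>z\<in>S1 y. (crel V E x0 (real N * lam) k (lvl V E x0 (real N * lam) x))\<^sup>*\<^sup>* x z"
      using dir1[OF x] by simp
    then show "SN x = SN y" using e1 S1_basic[OF y] by simp
  qed
qed

lemma claim2:
  assumes x: "x \<in> V" and y: "y \<in> V"
  shows "skel_E V E x0 (real N * lam) k (SN x) (SN y) \<longleftrightarrow> skel_E Vb Eb B0 (real N) 1 (S2 (S1 x)) (S2 (S1 y))"
proof -
  have SNb: "\<And>z. z \<in> V \<Longrightarrow> SN z \<in> blocks V E x0 (real N * lam) k \<and> z \<in> SN z"
    using sm_basic[OF g Nlam0, where ?x0.0 = x0 and ?k = k] .
  have SNo: "\<And>B a. B \<in> blocks V E x0 (real N * lam) k \<Longrightarrow> a \<in> B \<Longrightarrow> a \<in> V \<and> SN a = B"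
    using sm_of_block[OF g Nlam0, where ?x0.0 = x0 and ?k = k] .
  have S2b: "\<And>B. B \<in> Vb \<Longrightarrow> S2 B \<in> blocks Vb Eb B0 (real N) 1 \<and> B \<in> S2 B"
    using sm_basic[OF gb N0, where ?x0.0 = B0 and ?k = 1] .
  have S2o: "\<And>B C. B \<in> blocks Vb Eb B0 (real N) 1 \<Longrightarrow> C \<in> B \<Longrightarrow> C \<in> Vb \<and> S2 C = B"
    using sm_of_block[OF gb N0, where ?x0.0 = B0 and ?k = 1] .
  have c1: "SN x \<noteq> SN y \<longleftrightarrow> S2 (S1 x) \<noteq> S2 (S1 y)" using claim1[OF x y] by simp
  have m1: "SN x \<in> blocks V E x0 (real N * lam) k" "SN y \<in> blocks V E x0 (real N * lam) k"
    using SNb x y by auto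
  have m2: "S2 (S1 x) \<in> blocks Vb Eb B0 (real N) 1" "S2 (S1 y) \<in> blocks Vb Eb B0 (real N) 1"
    using S2b S1_basic x y by auto
  have fwd: "\<exists>B\<in>S2 (S1 x). \<exists>C\<in>S2 (S1 y). Eb B C"
    if ne: "SN x \<noteq> SN y" and ex: "\<exists>a\<in>SN x. \<exists>b\<in>SN y. E a b"
  proof -
    obtain a b where ab: "a \<in> SN x" "b \<in> SN y" "E a b" using ex by blast
    have a: "a \<in> V" "SN a = SN x" using SNo[OF m1(1) ab(1)] by auto
    have b: "b \<in> V" "SN b = SN y" using SNo[OF m1(2) ab(2)] by auto
    have "S2 (S1 a) = S2 (S1 x)" using claim1[OF a(1) x] a(2) by simp
    then have aa: "S1 a \<in> S2 (S1 x)" using S2b[OF conjunct1[OF S1_basic[OF a(1)]]] by simp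
    have "S2 (S1 b) = S2 (S1 y)" using claim1[OF b(1) y] b(2) by simp
    then have bb: "S1 b \<in> S2 (S1 y)" using S2b[OF conjunct1[OF S1_basic[OF b(1)]]] by simp
    have "S1 a \<noteq> S1 b"
    proof
      assume "S1 a = S1 b"
      then have "SN a = SN b" using claim1[OF a(1) b(1)] by simp
      then show False using a(2) b(2) ne by simp
    qed
    then have "Eb (S1 a) (S1 b)" using S1_edge[OF ab(3)] by simp
    then show ?thesis using aa bb by blast
  qed
  have bwd: "\<exists>a\<in>SN x. \<exists>b\<in>SN y. E a b" if ex: "\<exists>B\<in>S2 (S1 x). \<exists>C\<in>S2 (S1 y). Eb B C"
  proof -
    obtain B C where BC: "B \<in> S2 (S1 x)" "C \<in> S2 (S1 y)" "Eb B C" using ex by blast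
    obtain a b where ab: "E a b" "B = S1 a" "C = S1 b" using Eb_D[OF BC(3)] by blast
    have abV: "a \<in> V" "b \<in> V" using graph_V[OF g ab(1)] by auto
    have "S2 (S1 a) = S2 (S1 x)" using S2o[OF m2(1) BC(1)] ab(2) by simp
    then have "SN a = SN x" using claim1[OF abV(1) x] by simp
    then have aa: "a \<in> SN x" using SNb[OF abV(1)] by simp
    have "S2 (S1 b) = S2 (S1 y)" using S2o[OF m2(2) BC(2)] ab(3) by simp
    then have "SN b = SN y" using claim1[OF abV(2) y] by simp
    then have bb: "b \<in> SN y" using SNb[OF abV(2)] by simp
    show ?thesis using aa bb ab(1) by blast
  qed
  show ?thesis
    unfolding skel_E_def[of V E x0 "real N * lam" k] skel_E_def[of Vb Eb B0 "real N" 1]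
    using m1 m2 c1 fwd bwd by blast
qed

end

theorem proposition1:
  fixes V :: "'a set" and E :: "'a \<Rightarrow> 'a \<Rightarrow> bool" and x0 :: 'a
    and lam k :: real and N :: nat
  assumes "graph V E" and "connected_graph V E" and "x0 \<in> V"
    and "lam \<ge> 1" and "k \<ge> 1" and "N \<ge> 1"
  shows "\<forall>x\<in>V. \<forall>y\<in>V.
     (skel_map V E x0 (real N * lam) k x = skel_map V E x0 (real N * lam) k y \<longleftrightarrow>
        skel_map (blocks V E x0 lam k) (skel_E V E x0 lam k) (skel_map V E x0 lam k x0) (real N) 1
           (skel_map V E x0 lam k x) =
        skel_map (blocks V E x0 lam k) (skel_E V E x0 lam k) (skel_map V E x0 lam k x0) (real N) 1
           (skel_map V E x0 lam k y))
   \<and> (skel_E V E x0 (real N * lam) k (skel_map V E x0 (real N * lam) k x)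
                                      (skel_map V E x0 (real N * lam) k y) \<longleftrightarrow>
      skel_E (blocks V E x0 lam k) (skel_E V E x0 lam k) (skel_map V E x0 lam k x0) (real N) 1
        (skel_map (blocks V E x0 lam k) (skel_E V E x0 lam k) (skel_map V E x0 lam k x0) (real N) 1
           (skel_map V E x0 lam k x))
        (skel_map (blocks V E x0 lam k) (skel_E V E x0 lam k) (skel_map V E x0 lam k x0) (real N) 1
           (skel_map V E x0 lam k y)))"
  using claim1[OF assms] claim2[OF assms] by blast

end
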